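(* Let $M^4$ be a smooth $4$-manifold, $\sigma$ a smooth non-constant function on $M^4$ with $\sigma_i:=\partial\sigma/\partial x^i$, $\sigma_{ij}:=\partial^2\sigma/\partial x^i\partial x^j$, and $h_{11}(t)>0$ a Riemannian metric on $\mathbb{R}$, $h^{11}=1/h_{11}$. On the domain of $J^{1*}(\mathbb{R},M^4)$ where $\mathcal{P}^{1111}:=p^1_1p^1_2p^1_3p^1_4>0$, consider $\overset{*}{H}=4e^{-2\sigma(x)}h_{11}(t)[\mathcal{P}^{1111}]^{1/2}$. Then the scalar curvature of its Cartan canonical connection is $$\mathrm{Sc}(C\Gamma(N))=-4e^{-2\sigma}\left[\mathcal{P}^{1111}\right]^{1/2}\Sigma_{11}-\frac32h^{11}e^{2\sigma}\left[\mathcal{P}^{1111}\right]^{-1/2},$$ where $\Sigma_{11}=\sum_{1\le a<b\le 4}\dfrac{\sigma_{ab}}{p^1_ap^1_b}$.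
   Context: $\overset{*}{g}{}^{ij}=\frac{h^{11}}{2}\frac{\partial^2\overset{*}{H}}{\partial p^1_i\partial p^1_j}$ and $(\overset{*}{g}_{ij})$ is its inverse. The scalar curvature is $\mathrm{Sc}(C\Gamma(N))=\overset{*}{g}{}^{ij}R_{ij}-h^{11}\overset{*}{g}_{ij}S^{(i)(j)}_{(1)(1)}$ (summation), where, with $H^i_{jk}=4\delta^i_j\delta^i_k\sigma_i$, $C^{j(k)}_{i(1)}=\mathsf{C}^{jk}_i\frac{p^1_i}{p^1_jp^1_k}$ (no sums), $\mathsf{C}^{jk}_i=\frac{1-2\delta^{jk}-2\delta^j_i-2\delta^k_i+8\delta^j_i\delta^k_i}{8}$, $\underset{2}{N}{}^{(1)}_{(i)j}=-4\sigma_ip^1_i\delta_{ij}$, $\frac{\delta}{\delta x^i}=\frac{\partial}{\partial x^i}+4\sigma_ip^1_i\frac{\partial}{\partial p^1_i}$ and $R^{(1)}_{(r)ij}=\frac{\delta \underset{2}{N}{}^{(1)}_{(r)i}}{\delta x^j}-\frac{\delta \underset{2}{N}{}^{(1)}_{(r)j}}{\delta x^i}$, one sets $R_{ij}=\frac{\delta H^m_{ij}}{\delta x^m}-\frac{\delta H^m_{im}}{\delta x^j}+H^r_{ij}H^m_{rm}-H^r_{im}H^m_{rj}+C^{m(r)}_{i(1)}R^{(1)}_{(r)jm}$ and $S^{(i)(j)}_{(1)(1)}=\frac{\partial C^{i(j)}_{m(1)}}{\partial p^1_m}-\frac{\partial C^{i(m)}_{m(1)}}{\partial p^1_j}+C^{r(j)}_{m(1)}C^{i(m)}_{r(1)}-C^{r(m)}_{m(1)}C^{i(j)}_{r(1)}$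 (sums over $m,r$). *)

theory Defs
  imports "HOL-Analysis.Analysis"
begin

text \<open>Local coordinates: a point of the chart domain of M^4 is x :: real^4, the fibre
coordinates of J^{1*}(R,M^4) are p = (p^1_1,...,p^1_4) :: real^4, t :: real.
Indices range over the numeral type 4.\<close>

type_synonym fn4 = "real^4 \<Rightarrow> real^4 \<Rightarrow> real"

definition pd :: "4 \<Rightarrow> (real^4 \<Rightarrow> real) \<Rightarrow> real^4 \<Rightarrow> real" where
  "pd i f x = deriv (\<lambda>s. f (x + s *\<^sub>R axis i 1)) 0"

definition smooth_on :: "(real^4) set \<Rightarrow> (real^4 \<Rightarrow> real) \<Rightarrow> bool" where
  "smooth_on U f \<longleftrightarrow> (\<forall>is :: 4 list. (fold pd is f) differentiable_on U)"

definition dX :: "4 \<Rightarrow> fn4 \<Rightarrow> fn4" where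
  "dX i F x p = deriv (\<lambda>s. F (x + s *\<^sub>R axis i 1) p) 0"
definition dP :: "4 \<Rightarrow> fn4 \<Rightarrow> fn4" where
  "dP i F x p = deriv (\<lambda>s. F x (p + s *\<^sub>R axis i 1)) 0"

definition kd :: "4 \<Rightarrow> 4 \<Rightarrow> real" where
  "kd i j = (if i = j then 1 else 0)"

definition sig1 :: "(real^4 \<Rightarrow> real) \<Rightarrow> 4 \<Rightarrow> real^4 \<Rightarrow> real" where
  "sig1 \<sigma> i = pd i \<sigma>"
definition sig2 :: "(real^4 \<Rightarrow> real) \<Rightarrow> 4 \<Rightarrow> 4 \<Rightarrow> real^4 \<Rightarrow> real" where
  "sig2 \<sigma> i j = pd j (pd i \<sigma>)"

definition deltaX :: "(real^4 \<Rightarrow> real) \<Rightarrow> 4 \<Rightarrow> fn4 \<Rightarrow> fn4" where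
  "deltaX \<sigma> i F x p = dX i F x p + 4 * sig1 \<sigma> i x * p$i * dP i F x p"

definition Pprod :: "real^4 \<Rightarrow> real" where
  "Pprod p = p$1 * p$2 * p$3 * p$4"

definition Hstar :: "(real^4 \<Rightarrow> real) \<Rightarrow> (real \<Rightarrow> real) \<Rightarrow> real \<Rightarrow> fn4" where
  "Hstar \<sigma> h11 t x p = 4 * exp (-2 * \<sigma> x) * h11 t * sqrt (Pprod p)"

definition gUp :: "(real^4 \<Rightarrow> real) \<Rightarrow> (real \<Rightarrow> real) \<Rightarrow> real \<Rightarrow> real^4 \<Rightarrow> real^4 \<Rightarrow> real^4^4" where
  "gUp \<sigma> h11 t x p = (\<chi> i j. (1 / h11 t) / 2 * dP i (dP j (Hstar \<sigma> h11 t)) x p)"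

definition gDown :: "(real^4 \<Rightarrow> real) \<Rightarrow> (real \<Rightarrow> real) \<Rightarrow> real \<Rightarrow> real^4 \<Rightarrow> real^4 \<Rightarrow> real^4^4" where
  "gDown \<sigma> h11 t x p = matrix_inv (gUp \<sigma> h11 t x p)"

definition Hc :: "(real^4 \<Rightarrow> real) \<Rightarrow> 4 \<Rightarrow> 4 \<Rightarrow> 4 \<Rightarrow> fn4" where
  "Hc \<sigma> i j k x p = 4 * kd i j * kd i k * sig1 \<sigma> i x"

definition Cconst :: "4 \<Rightarrow> 4 \<Rightarrow> 4 \<Rightarrow> real" where
  "Cconst i j k = (1 - 2 * kd j k - 2 * kd j i - 2 * kd k i + 8 * kd j i * kd k i) / 8"

text \<open>C^{j(k)}_{i(1)} = Cconst^{jk}_i p_i/(p_j p_k); written Cc i j k\<close>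
definition Cc :: "4 \<Rightarrow> 4 \<Rightarrow> 4 \<Rightarrow> fn4" where
  "Cc i j k x p = Cconst i j k * p$i / (p$j * p$k)"

definition Nc :: "(real^4 \<Rightarrow> real) \<Rightarrow> 4 \<Rightarrow> 4 \<Rightarrow> fn4" where
  "Nc \<sigma> i j x p = -4 * sig1 \<sigma> i x * p$i * kd i j"

definition R1 :: "(real^4 \<Rightarrow> real) \<Rightarrow> 4 \<Rightarrow> 4 \<Rightarrow> 4 \<Rightarrow> fn4" where
  "R1 \<sigma> r i j x p = deltaX \<sigma> j (Nc \<sigma> r i) x p - deltaX \<sigma> i (Nc \<sigma> r j) x p"

definition Ric :: "(real^4 \<Rightarrow> real) \<Rightarrow> 4 \<Rightarrow> 4 \<Rightarrow> fn4" where
  "Ric \<sigma> i j x p =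
     (\<Sum>m\<in>UNIV. deltaX \<sigma> m (Hc \<sigma> m i j) x p)
   - (\<Sum>m\<in>UNIV. deltaX \<sigma> j (Hc \<sigma> m i m) x p)
   + (\<Sum>r\<in>UNIV. \<Sum>m\<in>UNIV. Hc \<sigma> r i j x p * Hc \<sigma> m r m x p)
   - (\<Sum>r\<in>UNIV. \<Sum>m\<in>UNIV. Hc \<sigma> r i m x p * Hc \<sigma> m r j x p)
   + (\<Sum>r\<in>UNIV. \<Sum>m\<in>UNIV. Cc i m r x p * R1 \<sigma> r j m x p)"

definition Sv :: "4 \<Rightarrow> 4 \<Rightarrow> fn4" where
  "Sv i j x p =
     (\<Sum>m\<in>UNIV. dP m (Cc m i j) x p)
   - (\<Sum>m\<in>UNIV. dP j (Cc m i m) x p)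
   + (\<Sum>r\<in>UNIV. \<Sum>m\<in>UNIV. Cc m r j x p * Cc r i m x p)
   - (\<Sum>r\<in>UNIV. \<Sum>m\<in>UNIV. Cc m r m x p * Cc r i j x p)"

definition ScCG :: "(real^4 \<Rightarrow> real) \<Rightarrow> (real \<Rightarrow> real) \<Rightarrow> real \<Rightarrow> real^4 \<Rightarrow> real^4 \<Rightarrow> real" where
  "ScCG \<sigma> h11 t x p =
     (\<Sum>i\<in>UNIV. \<Sum>j\<in>UNIV. gUp \<sigma> h11 t x p $ i $ j * Ric \<sigma> i j x p)
   - (1 / h11 t) * (\<Sum>i\<in>UNIV. \<Sum>j\<in>UNIV. gDown \<sigma> h11 t x p $ i $ j * Sv i j x p)"

definition Sigma11 :: "(real^4 \<Rightarrow> real) \<Rightarrow> real^4 \<Rightarrow> real^4 \<Rightarrow> real" where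
  "Sigma11 \<sigma> x p = (\<Sum>(a,b)\<in>{(a::4,b). a < b}. sig2 \<sigma> a b x / (p$a * p$b))"

end

theory Submission
  imports Defs
begin


lemma line_deriv:
  fixes g :: "real^4 \<Rightarrow> real"
  assumes "(g has_derivative g') (at (y + a *\<^sub>R e))"
  shows "((\<lambda>s. g (y + s *\<^sub>R e)) has_real_derivative g' e) (at a)"
proof -
  have lin: "linear g'" using assms has_derivative_linear by blast
  have inner: "((\<lambda>s::real. y + s *\<^sub>R e) has_derivative (\<lambda>h. h *\<^sub>R e)) (at a)"
    by (auto intro!: derivative_eq_intros)
  have "((g \<circ> (\<lambda>s. y + s *\<^sub>R e)) has_derivative (g' \<circ> (\<lambda>h. h *\<^sub>R e))) (at a)"
    by (rule diff_chain_at[OF inner]) (use assms in simp)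
  moreover have "(g' \<circ> (\<lambda>h. h *\<^sub>R e)) = (\<lambda>h. g' e * h)"
    using lin by (auto simp: linear_scale o_def mult.commute)
  ultimately show ?thesis
    by (simp add: has_field_derivative_def o_def)
qed

lemma pd_eq:
  assumes "(g has_derivative g') (at y)"
  shows "pd i g y = g' (axis i 1)"
proof -
  have "((\<lambda>s. g (y + s *\<^sub>R axis i 1)) has_real_derivative g' (axis i 1)) (at 0)"
    by (rule line_deriv) (use assms in simp)
  then show ?thesis unfolding pd_def by (rule DERIV_imp_deriv)
qed

lemma line_deriv_pd:
  assumes "g differentiable (at (y + a *\<^sub>R axis i 1))"
  shows "((\<lambda>s. g (y + s *\<^sub>R axis i 1)) has_real_derivative pd i g (y + a *\<^sub>R axis i 1)) (at a)"
proof -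
  obtain g' where g': "(g has_derivative g') (at (y + a *\<^sub>R axis i 1))"
    using assms unfolding differentiable_def by blast
  show ?thesis using line_deriv[OF g'] pd_eq[OF g'] by simp
qed

lemma pd_deriv0:
  assumes "g differentiable (at y)"
  shows "((\<lambda>s. g (y + s *\<^sub>R axis i 1)) has_real_derivative pd i g y) (at 0)"
  using line_deriv_pd[of g y 0 i] assms by simp

lemma coord_deriv:
  "((\<lambda>s. (p + s *\<^sub>R axis m 1) $ r) has_real_derivative kd m r) (at a)"
proof -
  have "(\<lambda>s. (p + s *\<^sub>R axis m (1::real)) $ r) = (\<lambda>s. p$r + s * kd m r)"
    by (auto simp: axis_def kd_def)
  moreover have "((\<lambda>s. p$r + s * kd m r) has_real_derivative kd m r) (at a)"
    by (auto intro!: derivative_eq_intros)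
  ultimately show ?thesis by simp
qed



lemma inball:
  assumes "0 \<le> a" "a \<le> t" "0 \<le> b" "b \<le> t" "2*t < r"
  shows "x + a *\<^sub>R axis i (1::real) + b *\<^sub>R axis j 1 \<in> ball x r"
proof -
  have "norm (a *\<^sub>R axis i (1::real) + b *\<^sub>R axis j 1) \<le> norm (a *\<^sub>R axis i (1::real)) + norm (b *\<^sub>R axis j (1::real))"
    by (rule norm_triangle_ineq)
  also have "\<dots> = a + b" using assms by simp
  finally have n: "norm (a *\<^sub>R axis i (1::real) + b *\<^sub>R axis j 1) < r" using assms by simp
  have "dist x (x + (a *\<^sub>R axis i (1::real) + b *\<^sub>R axis j 1)) = norm (a *\<^sub>R axis i (1::real) + b *\<^sub>R axis j 1)"
    by (metis add.right_neutral dist_add_cancel dist_0_norm)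
  then show ?thesis using n by (simp add: add.assoc)
qed

lemma mvt2d:
  fixes f :: "real^4 \<Rightarrow> real"
  assumes r: "ball x r \<subseteq> U" and t: "0 < t" "2*t < r"
   and d: "\<forall>y\<in>U. f differentiable (at y) \<and> pd i f differentiable (at y)"
  shows "\<exists>a b. 0<a \<and> a<t \<and> 0<b \<and> b<t \<and>
    f (x + t *\<^sub>R axis i 1 + t *\<^sub>R axis j 1) - f (x + t *\<^sub>R axis i 1) - f (x + t *\<^sub>R axis j 1) + f x
     = t*t*pd j (pd i f) (x + a *\<^sub>R axis i 1 + b *\<^sub>R axis j 1)"
proof -
  define u :: "real^4" where "u = axis i 1"
  define v :: "real^4" where "v = axis j 1"
  have inU: "x + a *\<^sub>R u + b *\<^sub>R v \<in> U" if "0 \<le> a" "a \<le> t" "0 \<le> b" "b \<le> t" for a b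
    using inball[OF that t(2)] r unfolding u_def v_def by blast
  define \<phi> where "\<phi> a = f (x + t *\<^sub>R v + a *\<^sub>R u) - f (x + a *\<^sub>R u)" for a
  have L: "\<And>g y a. g differentiable (at (y + a *\<^sub>R u)) \<Longrightarrow> ((\<lambda>s. g (y + s *\<^sub>R u)) has_real_derivative pd i g (y + a *\<^sub>R u)) (at a)"
    unfolding u_def by (rule line_deriv_pd)
  have D\<phi>: "DERIV \<phi> a :> pd i f (x + t *\<^sub>R v + a *\<^sub>R u) - pd i f (x + a *\<^sub>R u)"
    if "0 \<le> a" "a \<le> t" for a
  proof -
    have "x + t *\<^sub>R v + a *\<^sub>R u \<in> U" using inU[of a t] that t by (simp add: algebra_simps)
    hence 1: "f differentiable (at (x + t *\<^sub>R v + a *\<^sub>R u))" using d by blast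
    have "x + a *\<^sub>R u \<in> U" using inU[of a 0] that t by simp
    hence 2: "f differentiable (at (x + a *\<^sub>R u))" using d by blast
    show ?thesis unfolding \<phi>_def
      by (intro DERIV_diff L 1 2)
  qed
  obtain \<alpha> where \<alpha>: "0 < \<alpha>" "\<alpha> < t"
    "\<phi> t - \<phi> 0 = (t - 0) * (pd i f (x + t *\<^sub>R v + \<alpha> *\<^sub>R u) - pd i f (x + \<alpha> *\<^sub>R u))"
    using MVT2[OF t(1), of \<phi>, OF D\<phi>] by auto
  define \<psi> where "\<psi> b = pd i f (x + \<alpha> *\<^sub>R u + b *\<^sub>R v)" for b
  have D\<psi>: "DERIV \<psi> b :> pd j (pd i f) (x + \<alpha> *\<^sub>R u + b *\<^sub>R v)" if "0 \<le> b" "b \<le> t" for b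
  proof -
    have "x + \<alpha> *\<^sub>R u + b *\<^sub>R v \<in> U" using inU[of \<alpha> b] that \<alpha> by simp
    hence 1: "pd i f differentiable (at (x + \<alpha> *\<^sub>R u + b *\<^sub>R v))" using d by blast
    show ?thesis unfolding \<psi>_def v_def
      by (rule line_deriv_pd) (use 1 v_def in simp)
  qed
  obtain \<beta> where \<beta>: "0 < \<beta>" "\<beta> < t"
    "\<psi> t - \<psi> 0 = (t - 0) * pd j (pd i f) (x + \<alpha> *\<^sub>R u + \<beta> *\<^sub>R v)"
    using MVT2[OF t(1), of \<psi>, OF D\<psi>] by auto
  have "f (x + t *\<^sub>R u + t *\<^sub>R v) - f (x + t *\<^sub>R u) - f (x + t *\<^sub>R v) + f x = \<phi> t - \<phi> 0"
    unfolding \<phi>_def by (simp add: algebra_simps)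
  also have "\<dots> = t * (\<psi> t - \<psi> 0)" using \<alpha>(3) unfolding \<psi>_def by (simp add: algebra_simps)
  also have "\<dots> = t*t*pd j (pd i f) (x + \<alpha> *\<^sub>R u + \<beta> *\<^sub>R v)" using \<beta>(3) by simp
  finally show ?thesis using \<alpha> \<beta> unfolding u_def v_def by blast
qed

lemma clairaut:
  fixes f :: "real^4 \<Rightarrow> real"
  assumes U: "open U" "x \<in> U"
   and d: "\<forall>y\<in>U. f differentiable (at y) \<and> pd i f differentiable (at y) \<and> pd j f differentiable (at y)"
   and c: "isCont (pd j (pd i f)) x" "isCont (pd i (pd j f)) x"
  shows "pd j (pd i f) x = pd i (pd j f) x"
proof (rule ccontr)
  assume ne: "pd j (pd i f) x \<noteq> pd i (pd j f) x"
  define \<epsilon> where "\<epsilon> = \<bar>pd j (pd i f) x - pd i (pd j f) x\<bar> / 2"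
  have e0: "\<epsilon> > 0" using ne by (simp add: \<epsilon>_def)
  obtain r where r: "r > 0" "ball x r \<subseteq> U" using U open_contains_ball by blast
  obtain d1 where d1: "d1 > 0" "\<forall>y. dist y x < d1 \<longrightarrow> dist (pd j (pd i f) y) (pd j (pd i f) x) < \<epsilon>"
    using c(1) e0 unfolding continuous_at_eps_delta by blast
  obtain d2 where d2: "d2 > 0" "\<forall>y. dist y x < d2 \<longrightarrow> dist (pd i (pd j f) y) (pd i (pd j f) x) < \<epsilon>"
    using c(2) e0 unfolding continuous_at_eps_delta by blast
  define t where "t = min r (min d1 d2) / 4"
  have t: "0 < t" "2*t < r" "2*t < d1" "2*t < d2" using r d1 d2 by (auto simp: t_def)
  obtain a b where ab: "0<a" "a<t" "0<b" "b<t"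
    "f (x + t *\<^sub>R axis i 1 + t *\<^sub>R axis j 1) - f (x + t *\<^sub>R axis i 1) - f (x + t *\<^sub>R axis j 1) + f x
     = t*t*pd j (pd i f) (x + a *\<^sub>R axis i 1 + b *\<^sub>R axis j 1)"
    using mvt2d[OF r(2) t(1,2), of f i j] d by blast
  obtain a' b' where ab': "0<a'" "a'<t" "0<b'" "b'<t"
    "f (x + t *\<^sub>R axis j 1 + t *\<^sub>R axis i 1) - f (x + t *\<^sub>R axis j 1) - f (x + t *\<^sub>R axis i 1) + f x
     = t*t*pd i (pd j f) (x + a' *\<^sub>R axis j 1 + b' *\<^sub>R axis i 1)"
    using mvt2d[OF r(2) t(1,2), of f j i] d by blast
  have "x + t *\<^sub>R axis j 1 + t *\<^sub>R axis i 1 = x + t *\<^sub>R axis i (1::real) + t *\<^sub>R axis j 1"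
    by (simp add: algebra_simps)
  hence "t*t*pd j (pd i f) (x + a *\<^sub>R axis i 1 + b *\<^sub>R axis j 1) = t*t*pd i (pd j f) (x + a' *\<^sub>R axis j 1 + b' *\<^sub>R axis i 1)"
    using ab(5) ab'(5) by (simp add: algebra_simps)
  hence eq: "pd j (pd i f) (x + a *\<^sub>R axis i 1 + b *\<^sub>R axis j 1) = pd i (pd j f) (x + a' *\<^sub>R axis j 1 + b' *\<^sub>R axis i 1)"
    using t(1) by simp
  have "x + a *\<^sub>R axis i 1 + b *\<^sub>R axis j 1 \<in> ball x d1"
    using inball[of a t b d1 x i j] ab t by simp
  hence "dist (x + a *\<^sub>R axis i 1 + b *\<^sub>R axis j 1) x < d1" by (simp add: dist_commute)
  hence 1: "dist (pd j (pd i f) (x + a *\<^sub>R axis i 1 + b *\<^sub>R axis j 1)) (pd j (pd i f) x) < \<epsilon>"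
    using d1(2) by blast
  have "x + a' *\<^sub>R axis j 1 + b' *\<^sub>R axis i 1 \<in> ball x d2"
    using inball[of a' t b' d2 x j i] ab' t by simp
  hence "dist (x + a' *\<^sub>R axis j 1 + b' *\<^sub>R axis i 1) x < d2" by (simp add: dist_commute)
  hence 2: "dist (pd i (pd j f) (x + a' *\<^sub>R axis j 1 + b' *\<^sub>R axis i 1)) (pd i (pd j f) x) < \<epsilon>"
    using d2(2) by blast
  have aux: "\<And>(A::real) (B::real) (X::real) (Y::real). \<bar>A - X\<bar> < \<bar>X - Y\<bar>/2 \<Longrightarrow> \<bar>B - Y\<bar> < \<bar>X - Y\<bar>/2 \<Longrightarrow> A = B \<Longrightarrow> False"
    by (auto simp: abs_if split: if_splits)
  show False using aux[OF 1[unfolded \<epsilon>_def dist_real_def] 2[unfolded \<epsilon>_def dist_real_def] eq] .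
qed



lemma deriv_cmult0:
  assumes "DERIV g a :> D" shows "deriv (\<lambda>s. c * g s) a = c * D"
  by (rule DERIV_imp_deriv) (rule DERIV_cmult[OF assms])

lemma deriv_const0: "deriv (\<lambda>s. c) a = (0::real)"
  by (rule DERIV_imp_deriv) (rule DERIV_const)

lemma dX_Hc:
  assumes "pd a \<sigma> differentiable (at x)"
  shows "deltaX \<sigma> m (Hc \<sigma> a b c) x p = 4 * kd a b * kd a c * sig2 \<sigma> a m x"
proof -
  have "dX m (Hc \<sigma> a b c) x p = deriv (\<lambda>s. (4 * kd a b * kd a c) * pd a \<sigma> (x + s *\<^sub>R axis m 1)) 0"
    by (simp add: dX_def Hc_def sig1_def)
  also have "\<dots> = 4 * kd a b * kd a c * sig2 \<sigma> a m x"
    using deriv_cmult0[OF pd_deriv0[OF assms, of m]] by (simp add: sig2_def)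
  finally have 1: "dX m (Hc \<sigma> a b c) x p = 4 * kd a b * kd a c * sig2 \<sigma> a m x" .
  have 2: "dP m (Hc \<sigma> a b c) x p = 0"
    by (simp add: dP_def Hc_def deriv_const0)
  show ?thesis by (simp add: deltaX_def 1 2)
qed

lemma dX_Nc:
  assumes "pd r \<sigma> differentiable (at x)"
  shows "deltaX \<sigma> m (Nc \<sigma> r j) x p = -4 * sig2 \<sigma> r m x * p$r * kd r j
      + 4 * sig1 \<sigma> m x * p$m * (-4 * sig1 \<sigma> r x * kd r j * kd m r)"
proof -
  have "dX m (Nc \<sigma> r j) x p = deriv (\<lambda>s. (-4 * p$r * kd r j) * pd r \<sigma> (x + s *\<^sub>R axis m 1)) 0"
    by (simp add: dX_def Nc_def sig1_def mult_ac)
  also have "\<dots> = (-4 * p$r * kd r j) * sig2 \<sigma> r m x"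
    using deriv_cmult0[OF pd_deriv0[OF assms, of m], of "-4 * p$r * kd r j"] by (simp only: sig2_def)
  also have "\<dots> = -4 * sig2 \<sigma> r m x * p$r * kd r j" by simp
  finally have 1: "dX m (Nc \<sigma> r j) x p = -4 * sig2 \<sigma> r m x * p$r * kd r j" .
  have "dP m (Nc \<sigma> r j) x p = deriv (\<lambda>s. (-4 * sig1 \<sigma> r x * kd r j) * (p + s *\<^sub>R axis m 1) $ r) 0"
    by (simp add: dP_def Nc_def mult_ac)
  also have "\<dots> = -4 * sig1 \<sigma> r x * kd r j * kd m r"
    by (rule deriv_cmult0[OF coord_deriv[of p m r 0]])
  finally have 2: "dP m (Nc \<sigma> r j) x p = -4 * sig1 \<sigma> r x * kd r j * kd m r" .
  show ?thesis by (simp add: deltaX_def 1 2)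
qed

lemma R1_closed:
  assumes "pd r \<sigma> differentiable (at x)"
  shows "R1 \<sigma> r i j x p = -4 * p$r * (sig2 \<sigma> r j x * kd r i - sig2 \<sigma> r i x * kd r j)"
  unfolding R1_def dX_Nc[OF assms]
  by (cases "r = i"; cases "r = j"; simp add: kd_def algebra_simps)

lemma sumkd: "(\<Sum>m\<in>UNIV. kd m i * f m) = (f i :: real)"
  using exhaust_4[of i] by (elim disjE) (simp_all add: sum_4 kd_def)

lemma Ric_closed:
  assumes "\<And>a. pd a \<sigma> differentiable (at x)"
  shows "Ric \<sigma> i j x p = 4 * kd i j * sig2 \<sigma> i i x - 4 * sig2 \<sigma> i j x
     + (\<Sum>r\<in>UNIV. \<Sum>m\<in>UNIV. Cconst i m r * p$i / (p$m * p$r) *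
        (-4 * p$r * (sig2 \<sigma> r m x * kd r j - sig2 \<sigma> r j x * kd r m)))"
proof -
  have 1: "(\<Sum>m\<in>UNIV. deltaX \<sigma> m (Hc \<sigma> m i j) x p) = 4 * kd i j * sig2 \<sigma> i i x"
    unfolding dX_Hc[OF assms]
    using exhaust_4[of i] exhaust_4[of j] by (elim disjE) (simp_all add: sum_4 kd_def)
  have 2: "(\<Sum>m\<in>UNIV. deltaX \<sigma> j (Hc \<sigma> m i m) x p) = 4 * sig2 \<sigma> i j x"
    unfolding dX_Hc[OF assms]
    using exhaust_4[of i] by (elim disjE) (simp_all add: sum_4 kd_def)
  have 3: "(\<Sum>r\<in>UNIV. \<Sum>m\<in>UNIV. Hc \<sigma> r i j x p * Hc \<sigma> m r m x p)
      = (\<Sum>r\<in>UNIV. \<Sum>m\<in>UNIV. Hc \<sigma> r i m x p * Hc \<sigma> m r j x p)"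
    unfolding Hc_def
    using exhaust_4[of i] exhaust_4[of j] by (elim disjE) (simp_all add: sum_4 kd_def)
  show ?thesis unfolding Ric_def 1 2 3 R1_closed[OF assms] Cc_def by simp
qed



definition Rj :: "4 \<Rightarrow> real^4 \<Rightarrow> real" where
  "Rj j q = Pprod (q + (1 - q$j) *\<^sub>R axis j 1)"

lemma Pprod_line: "Pprod (q + s *\<^sub>R axis j 1) = (q$j + s) * Rj j q"
  unfolding Rj_def using exhaust_4[of j]
  by (elim disjE) (simp_all add: Pprod_def axis_def algebra_simps)

lemma Pprod_nz: "Pprod q \<noteq> 0 \<Longrightarrow> q$j \<noteq> 0"
  using exhaust_4[of j] by (elim disjE) (auto simp: Pprod_def)

lemma Rj_eq: "q$j \<noteq> 0 \<Longrightarrow> Rj j q = Pprod q / q$j"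
  using Pprod_line[of q 0 j] by simp

lemma DERIV_Pline: "DERIV (\<lambda>s. Pprod (q + s *\<^sub>R axis j 1)) a :> Rj j q"
  unfolding Pprod_line by (auto intro!: derivative_eq_intros)

lemma DERIV_sqrtP:
  assumes "Pprod q > 0"
  shows "DERIV (\<lambda>s. sqrt (Pprod (q + s *\<^sub>R axis j 1))) 0 :> inverse (sqrt (Pprod q)) / 2 * Rj j q"
proof -
  have "DERIV sqrt (Pprod (q + 0 *\<^sub>R axis j 1)) :> inverse (sqrt (Pprod q)) / 2"
    using DERIV_real_sqrt[OF assms] by simp
  from DERIV_chain2[OF this DERIV_Pline] show ?thesis .
qed

lemma dP1:
  assumes "Pprod q > 0"
  shows "dP j (Hstar \<sigma> h11 t) x q = (4 * exp (-2 * \<sigma> x) * h11 t) * sqrt (Pprod q) / (2 * q$j)"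
proof -
  define C where "C = 4 * exp (-2 * \<sigma> x) * h11 t"
  have qj: "q$j \<noteq> 0" using Pprod_nz assms by force
  have "dP j (Hstar \<sigma> h11 t) x q = deriv (\<lambda>s. C * sqrt (Pprod (q + s *\<^sub>R axis j 1))) 0"
    by (simp add: dP_def Hstar_def C_def)
  also have "\<dots> = C * (inverse (sqrt (Pprod q)) / 2 * Rj j q)"
    by (rule deriv_cmult0[OF DERIV_sqrtP[OF assms]])
  also have "\<dots> = C * sqrt (Pprod q) / (2 * q$j)"
  proof -
    have s: "Pprod q = sqrt (Pprod q) * sqrt (Pprod q)" using assms by simp
    have sp: "sqrt (Pprod q) > 0" using assms by simp
    show ?thesis unfolding Rj_eq[OF qj] by (subst s) (use sp qj in \<open>simp add: field_simps\<close>)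
  qed
  finally show ?thesis by (simp add: C_def)
qed

lemma dP2:
  assumes P: "Pprod p > 0"
  shows "dP i (dP j (Hstar \<sigma> h11 t)) x p
     = (4 * exp (-2 * \<sigma> x) * h11 t) * sqrt (Pprod p) * (1 - 2 * kd i j) / (4 * (p$i * p$j))"
proof -
  define C where "C = 4 * exp (-2 * \<sigma> x) * h11 t"
  define G where "G s = C * sqrt (Pprod (p + s *\<^sub>R axis i 1)) / (2 * (p + s *\<^sub>R axis i 1)$j)" for s
  have pi: "p$i \<noteq> 0" and pj: "p$j \<noteq> 0" using Pprod_nz P by force+
  have op: "open {s::real. 0 < Pprod (p + s *\<^sub>R axis i 1)}"
    unfolding Pprod_line by (intro open_Collect_less continuous_intros)
  have "eventually (\<lambda>s. s \<in> {s::real. 0 < Pprod (p + s *\<^sub>R axis i 1)}) (nhds 0)"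
    by (rule eventually_nhds_in_open[OF op]) (use P in simp)
  hence ev: "eventually (\<lambda>s. dP j (Hstar \<sigma> h11 t) x (p + s *\<^sub>R axis i 1) = G s) (nhds 0)"
    by (rule eventually_mono) (simp add: dP1 G_def C_def)
  have dG: "DERIV G 0 :> ((C * (inverse (sqrt (Pprod p)) / 2 * Rj i p)) * (2 * p$j) - C * sqrt (Pprod p) * (2 * kd i j))
        / ((2 * p$j) * (2 * p$j))"
    unfolding G_def
    using DERIV_divide[OF DERIV_cmult[OF DERIV_sqrtP[OF P, of i], where c=C] DERIV_cmult[OF coord_deriv[of p i j 0], where c=2]] pj
    by simp
  have dF: "DERIV (\<lambda>s. dP j (Hstar \<sigma> h11 t) x (p + s *\<^sub>R axis i 1)) 0 :>
     ((C * (inverse (sqrt (Pprod p)) / 2 * Rj i p)) * (2 * p$j) - C * sqrt (Pprod p) * (2 * kd i j))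
        / ((2 * p$j) * (2 * p$j))"
    using DERIV_cong_ev[OF refl ev refl] dG by blast
  have "dP i (dP j (Hstar \<sigma> h11 t)) x p = ((C * (inverse (sqrt (Pprod p)) / 2 * Rj i p)) * (2 * p$j) - C * sqrt (Pprod p) * (2 * kd i j))
        / ((2 * p$j) * (2 * p$j))"
    unfolding dP_def[of i] by (rule DERIV_imp_deriv[OF dF])
  also have "\<dots> = C * sqrt (Pprod p) * (1 - 2 * kd i j) / (4 * (p$i * p$j))"
  proof -
    have s: "Pprod p = sqrt (Pprod p) * sqrt (Pprod p)" using P by simp
    have sp: "sqrt (Pprod p) > 0" using P by simp
    show ?thesis unfolding Rj_eq[OF pi] kd_def
      by (subst s) (use sp pi pj in \<open>auto simp add: field_simps\<close>)
  qed
  finally show ?thesis by (simp add: C_def)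
qed



lemma gUp_closed:
  assumes "h11 t > 0" "Pprod p > 0"
  shows "gUp \<sigma> h11 t x p $ i $ j = exp (-2 * \<sigma> x) * sqrt (Pprod p) * (1 - 2 * kd i j) / (2 * (p$i * p$j))"
proof -
  have "p$i \<noteq> 0" "p$j \<noteq> 0" using Pprod_nz assms(2) by force+
  then show ?thesis using assms by (simp add: gUp_def dP2 field_simps)
qed

lemma matinv_eq:
  fixes A B :: "real^4^4"
  assumes "A ** B = mat 1" "B ** A = mat 1"
  shows "matrix_inv A = B"
  unfolding matrix_inv_def
proof (rule some_equality)
  show "A ** B = mat 1 \<and> B ** A = mat 1" using assms by blast
next
  fix B' :: "real^4^4" assume h: "A ** B' = mat 1 \<and> B' ** A = mat 1"
  have "B' = B' ** (A ** B)" using assms by (simp add: matrix_mul_rid)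
  also have "\<dots> = (B' ** A) ** B" by (simp add: matrix_mul_assoc)
  also have "\<dots> = B" using h by (simp add: matrix_mul_lid)
  finally show "B' = B" .
qed

lemma gDown_closed:
  assumes "h11 t > 0" "Pprod p > 0"
  shows "gDown \<sigma> h11 t x p $ i $ j = p$i * p$j * (1 - 2 * kd i j) / (2 * exp (-2 * \<sigma> x) * sqrt (Pprod p))"
proof -
  define e where "e = exp (-2 * \<sigma> x)"
  define sq where "sq = sqrt (Pprod p)"
  have e: "e > 0" and sq: "sq > 0" using assms by (auto simp: e_def sq_def)
  have nz: "p$1 \<noteq> 0" "p$2 \<noteq> 0" "p$3 \<noteq> 0" "p$4 \<noteq> 0" using Pprod_nz assms(2) by force+
  define A :: "real^4^4" where "A = (\<chi> i j. e * sq * (1 - 2 * kd i j) / (2 * (p$i * p$j)))"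
  define B :: "real^4^4" where "B = (\<chi> i j. p$i * p$j * (1 - 2 * kd i j) / (2 * e * sq))"
  have gA: "gUp \<sigma> h11 t x p = A"
    unfolding A_def vec_eq_iff using gUp_closed[of h11 t p, OF assms] by (simp add: e_def sq_def)
  have AB: "A ** B = mat 1"
    unfolding A_def B_def matrix_matrix_mult_def mat_def vec_eq_iff forall_4
    using e sq nz by (simp add: sum_4 kd_def field_simps)
  have BA: "B ** A = mat 1"
    unfolding A_def B_def matrix_matrix_mult_def mat_def vec_eq_iff forall_4
    using e sq nz by (simp add: sum_4 kd_def field_simps)
  have "gDown \<sigma> h11 t x p = B" unfolding gDown_def gA by (rule matinv_eq[OF AB BA])
  then show ?thesis by (simp add: B_def e_def sq_def)
qed

definition dCc :: "real^4 \<Rightarrow> 4 \<Rightarrow> 4 \<Rightarrow> 4 \<Rightarrow> 4 \<Rightarrow> real" where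
  "dCc p m c a b = Cconst c a b * (kd m c * (p$a*p$b) - p$c*(kd m a*p$b + p$a*kd m b))/((p$a*p$b)*(p$a*p$b))"

lemma dP_Cc:
  assumes "p$a \<noteq> 0" "p$b \<noteq> 0"
  shows "dP m (Cc c a b) x p = dCc p m c a b"
proof -
  have "dP m (Cc c a b) x p = deriv (\<lambda>s. (Cconst c a b * (p + s *\<^sub>R axis m 1)$c) / ((p + s *\<^sub>R axis m 1)$a * (p + s *\<^sub>R axis m 1)$b)) 0"
    by (simp add: dP_def Cc_def)
  also have "\<dots> = ((Cconst c a b * kd m c) * (p$a * p$b) - Cconst c a b * p$c * (kd m a * p$b + kd m b * p$a)) / ((p$a * p$b) * (p$a * p$b))"
    by (rule DERIV_imp_deriv)
       (use DERIV_divide[OF DERIV_cmult[OF coord_deriv[of p m c 0], where c="Cconst c a b"] DERIV_mult[OF coord_deriv[of p m a 0] coord_deriv[of p m b 0]]] assms in simp)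
  also have "\<dots> = dCc p m c a b" by (simp add: dCc_def algebra_simps)
  finally show ?thesis .
qed

lemma algS:
  fixes p :: "real^4"
  assumes nz: "p$1 \<noteq> 0" "p$2 \<noteq> 0" "p$3 \<noteq> 0" "p$4 \<noteq> 0"
  shows "(\<Sum>m\<in>UNIV. dCc p m m i j) - (\<Sum>m\<in>UNIV. dCc p j m i m)
   + (\<Sum>r\<in>UNIV. \<Sum>m\<in>UNIV. Cc m r j x p * Cc r i m x p)
   - (\<Sum>r\<in>UNIV. \<Sum>m\<in>UNIV. Cc m r m x p * Cc r i j x p) = (1 - 4 * kd i j) / (8 * (p$i * p$j))"
  using exhaust_4[of i] exhaust_4[of j] nz
  by (elim disjE) (simp_all add: sum_4 kd_def Cconst_def dCc_def Cc_def field_simps)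

lemma Sv_closed:
  assumes "Pprod p > 0"
  shows "Sv i j x p = (1 - 4 * kd i j) / (8 * (p$i * p$j))"
proof -
  have nz: "\<And>k. p$k \<noteq> 0" using Pprod_nz assms by force
  have nz4: "p$1 \<noteq> 0" "p$2 \<noteq> 0" "p$3 \<noteq> 0" "p$4 \<noteq> 0" using nz by auto
  show ?thesis unfolding Sv_def dP_Cc[OF nz nz] using algS[OF nz4] by simp
qed

lemma algSv:
  fixes p :: "real^4"
  assumes nz: "p$1 \<noteq> 0" "p$2 \<noteq> 0" "p$3 \<noteq> 0" "p$4 \<noteq> 0" and E: "E \<noteq> 0"
  shows "(\<Sum>i\<in>UNIV. \<Sum>j\<in>UNIV. p$i * p$j * (1 - 2 * kd i j) / E * ((1 - 4 * kd i j) / (8 * (p$i * p$j))))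
     = 3 / E"
  unfolding sum_4 kd_def using nz E by (simp add: field_simps)



lemma sum_lt_half:
  fixes g :: "'a::{finite,linorder} \<Rightarrow> 'a \<Rightarrow> real"
  assumes sym: "\<And>a b. g a b = g b a"
  shows "(\<Sum>(a,b)\<in>{(a,b). a<b}. g a b) = (\<Sum>a\<in>UNIV. \<Sum>b\<in>UNIV. if a = b then 0 else g a b) / 2"
proof -
  define L where "L = {(a::'a,b). a<b}"
  define L' where "L' = {(a::'a,b). b<a}"
  have "(\<Sum>a\<in>UNIV. \<Sum>b\<in>UNIV. if a = b then 0 else g a b) = (\<Sum>(a,b)\<in>UNIV. if a = b then 0 else g a b)"
    by (simp add: sum.cartesian_product)
  also have "\<dots> = (\<Sum>(a,b)\<in>L \<union> L'. if a = b then 0 else g a b)"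
    by (rule sum.mono_neutral_right) (auto simp: L_def L'_def neq_iff split: if_splits)
  also have "\<dots> = (\<Sum>(a,b)\<in>L. if a = b then 0 else g a b) + (\<Sum>(a,b)\<in>L'. if a = b then 0 else g a b)"
    by (rule sum.union_disjoint) (auto simp: L_def L'_def)
  also have "(\<Sum>(a,b)\<in>L'. if a = b then 0 else g a b) = (\<Sum>(a,b)\<in>L. if a = b then 0 else g a b)"
    by (rule sum.reindex_bij_witness[of _ prod.swap prod.swap]) (auto simp: L_def L'_def sym)
  also have "(\<Sum>(a,b)\<in>L. if a = b then 0 else g a b) = (\<Sum>(a,b)\<in>L. g a b)"
    by (rule sum.cong) (auto simp: L_def)
  finally show ?thesis by (simp add: L_def)
qed

lemma algA:
  fixes p :: "real^4" and D :: "4 \<Rightarrow> 4 \<Rightarrow> real"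
  assumes nz: "p$1 \<noteq> 0" "p$2 \<noteq> 0" "p$3 \<noteq> 0" "p$4 \<noteq> 0"
  and sym: "D 2 1 = D 1 2" "D 3 1 = D 1 3" "D 4 1 = D 1 4" "D 3 2 = D 2 3" "D 4 2 = D 2 4" "D 4 3 = D 3 4"
  shows "(\<Sum>i\<in>UNIV. \<Sum>j\<in>UNIV. (1 - 2 * kd i j) / (p$i * p$j) *
     (4 * kd i j * D i i - 4 * D i j + (\<Sum>r\<in>UNIV. \<Sum>m\<in>UNIV. Cconst i m r * p$i / (p$m * p$r) *
        (-4 * p$r * (D r m * kd r j - D r j * kd r m)))))
   = -4 * (\<Sum>a\<in>UNIV. \<Sum>b\<in>UNIV. (if a = b then 0 else D a b / (p$a * p$b)))"
  unfolding sum_4 kd_def Cconst_def using nz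
  apply (simp add: sym)
  apply (simp add: field_simps)
  done

theorem mainTheorem4:
  fixes \<sigma> :: "real^4 \<Rightarrow> real" and h11 :: "real \<Rightarrow> real" and U :: "(real^4) set"
    and t :: real and x p :: "real^4"
  assumes "open U" and "smooth_on U \<sigma>"
    and "\<exists>a\<in>U. \<exists>b\<in>U. \<sigma> a \<noteq> \<sigma> b"
    and "\<forall>s. h11 s > 0"
    and "x \<in> U" and "Pprod p > 0"
  shows "ScCG \<sigma> h11 t x p =
     - 4 * exp (-2 * \<sigma> x) * sqrt (Pprod p) * Sigma11 \<sigma> x p
     - 3 / 2 * (1 / h11 t) * exp (2 * \<sigma> x) / sqrt (Pprod p)"
proof -
  have sm: "\<And>is. (fold pd is \<sigma>) differentiable_on U" using assms(2) unfolding smooth_on_def by blast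
  have dat: "\<And>f. f differentiable_on U \<Longrightarrow> \<forall>y\<in>U. f differentiable (at y)"
    using differentiable_on_eq_differentiable_at[OF assms(1)] by blast
  have d0: "\<forall>y\<in>U. \<sigma> differentiable (at y)" using dat[OF sm[of "[]"]] by simp
  have d1: "\<And>a. \<forall>y\<in>U. pd a \<sigma> differentiable (at y)" using dat[OF sm[of "[_]"]] by simp
  have d2: "\<And>a b. \<forall>y\<in>U. pd b (pd a \<sigma>) differentiable (at y)" using dat[OF sm[of "[_,_]"]] by simp
  have c2: "\<And>a b. isCont (pd b (pd a \<sigma>)) x"
    using d2 assms(5) differentiable_imp_continuous_within by blast
  have sym: "\<And>a b. sig2 \<sigma> a b x = sig2 \<sigma> b a x"
    unfolding sig2_def
    by (rule clairaut[OF assms(1,5)]) (use d0 d1 c2 in auto)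
  have dx: "\<And>a. pd a \<sigma> differentiable (at x)" using d1 assms(5) by blast
  have h: "h11 t > 0" using assms(4) by blast
  have P: "Pprod p > 0" using assms(6) .
  have nz: "p$1 \<noteq> 0" "p$2 \<noteq> 0" "p$3 \<noteq> 0" "p$4 \<noteq> 0" using Pprod_nz P by force+
  define e where "e = exp (-2 * \<sigma> x)"
  define sq where "sq = sqrt (Pprod p)"
  have e: "e > 0" and sq: "sq > 0" using P by (auto simp: e_def sq_def)
  define D where "D a b = sig2 \<sigma> a b x" for a b
  have s6: "D 2 1 = D 1 2" "D 3 1 = D 1 3" "D 4 1 = D 1 4" "D 3 2 = D 2 3" "D 4 2 = D 2 4" "D 4 3 = D 3 4"
    unfolding D_def by (rule sym)+
  define S' where "S' = (\<Sum>a\<in>UNIV. \<Sum>b\<in>UNIV. (if a = b then 0 else D a b / (p$a * p$b)))"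
  have part1: "(\<Sum>i\<in>UNIV. \<Sum>j\<in>UNIV. gUp \<sigma> h11 t x p $ i $ j * Ric \<sigma> i j x p) = (e * sq / 2) * (-4 * S')"
  proof -
    have "(\<Sum>i\<in>UNIV. \<Sum>j\<in>UNIV. gUp \<sigma> h11 t x p $ i $ j * Ric \<sigma> i j x p)
      = (\<Sum>i\<in>UNIV. \<Sum>j\<in>UNIV. (e * sq / 2) * ((1 - 2 * kd i j) / (p$i * p$j) *
     (4 * kd i j * D i i - 4 * D i j + (\<Sum>r\<in>UNIV. \<Sum>m\<in>UNIV. Cconst i m r * p$i / (p$m * p$r) *
        (-4 * p$r * (D r m * kd r j - D r j * kd r m))))))"
      unfolding gUp_closed[of h11 t p, OF h P] Ric_closed[OF dx] D_def e_def sq_def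
      by (rule sum.cong[OF refl], rule sum.cong[OF refl]) simp
    also have "\<dots> = (e * sq / 2) * (\<Sum>i\<in>UNIV. \<Sum>j\<in>UNIV. (1 - 2 * kd i j) / (p$i * p$j) *
     (4 * kd i j * D i i - 4 * D i j + (\<Sum>r\<in>UNIV. \<Sum>m\<in>UNIV. Cconst i m r * p$i / (p$m * p$r) *
        (-4 * p$r * (D r m * kd r j - D r j * kd r m)))))"
      by (simp add: sum_distrib_left)
    also have "\<dots> = (e * sq / 2) * (-4 * S')"
      unfolding S'_def by (simp only: algA[OF nz s6])
    finally show ?thesis .
  qed
  have part2: "(\<Sum>i\<in>UNIV. \<Sum>j\<in>UNIV. gDown \<sigma> h11 t x p $ i $ j * Sv i j x p) = 3 / (2 * e * sq)"
    unfolding gDown_closed[of h11 t p, OF h P] Sv_closed[OF P] e_def[symmetric] sq_def[symmetric]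
    by (rule algSv[OF nz]) (use e sq in simp)
  have sig: "Sigma11 \<sigma> x p = S' / 2"
    unfolding Sigma11_def S'_def D_def
    by (rule sum_lt_half) (metis sym mult.commute)
  have ex: "exp (2 * \<sigma> x) = 1 / e" by (simp add: e_def exp_minus divide_inverse)
  show ?thesis
    unfolding ScCG_def part1 part2 sig ex e_def[symmetric] sq_def[symmetric]
    using e sq h by (simp add: field_simps)
qed


end
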